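(* Suppose $\|\mu_a\|_\infty,\|\widehat\mu_a\|_\infty\le B<\infty$ a.s. for all $a$. With $f_C(x)=\|x-\Pi_C(x)\|_2^2$, $$\sup_{C\in\mathcal{C}_k}\big|\mathbb{P}\{f_C(\widehat\mu)-f_C(\mu)\}\big|\lesssim\max_a\|\widehat\mu_a-\mu_a\|_{\mathbb{P},1}.$$
   Context: $Z=(Y,A,X)\sim\mathbb{P}$, $A\in\mathcal{A}=\{1,\dots,p\}$; $\mu_a(X)=\mathbb{E}(Y\mid X,A=a)$, $\mu=(\mu_1(X),\dots,\mu_p(X))^\top$; $\widehat\mu$ an estimator of $\mu$ held fixed under $\mathbb{P}$. Codebooks $C=\{c_1,\dots,c_k\}\subset\mathbb{R}^p$; $\mathcal{C}_k$ the codebooks of size $k$ in the image of $\mu$; $\Pi_C(x)=\arg\min_{c\in C}\|c-x\|_2^2$. $\|f\|_{\mathbb{P},1}=\int|f|d\mathbb{P}$; $\lesssim$ inequality up to a multiplicative constant. *)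

theory Defs
  imports "HOL-Probability.Probability"
begin

definition proj_cb :: "(real ^ 'p) set \<Rightarrow> real ^ 'p \<Rightarrow> real ^ 'p" where
  "proj_cb C x = (ARG_MIN (\<lambda>c. (norm (c - x))\<^sup>2) c. c \<in> C)"

definition f_cb :: "(real ^ 'p) set \<Rightarrow> real ^ 'p \<Rightarrow> real" where
  "f_cb C x = (norm (x - proj_cb C x))\<^sup>2"

definition codebooks :: "'a measure \<Rightarrow> ('a \<Rightarrow> real ^ 'p) \<Rightarrow> nat \<Rightarrow> (real ^ 'p) set set" where
  "codebooks M mu k = {C. finite C \<and> card C = k \<and> C \<subseteq> mu ` space M}"

end

theory Submission
  imports Defs
begin

lemma proj_props:
  assumes "finite C" "C \<noteq> {}"
  shows "proj_cb C x \<in> C" "\<And>c. c \<in> C \<Longrightarrow> f_cb C x \<le> (norm (x - c))\<^sup>2"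
proof -
  have e: "proj_cb C x = arg_min_on (\<lambda>c. (norm (c - x))\<^sup>2) C"
    unfolding proj_cb_def arg_min_on_def by simp
  show "proj_cb C x \<in> C" using arg_min_if_finite(1)[OF assms] e by simp
  fix c assume "c \<in> C"
  then show "f_cb C x \<le> (norm (x - c))\<^sup>2"
    using arg_min_if_finite(2)[OF assms, of "\<lambda>c. (norm (c - x))\<^sup>2"] e
    unfolding f_cb_def by (auto simp: norm_minus_commute not_less)
qed

lemma norm_sq_vec: "(norm (v :: real ^ 'p))\<^sup>2 = (\<Sum>a\<in>UNIV. (v $ a)\<^sup>2)"
  unfolding power2_norm_eq_inner inner_vec_def by (simp add: power2_eq_square)

lemma sqdiff:
  fixes x y c :: "real ^ 'p"
  assumes "\<forall>a. \<bar>x$a\<bar> \<le> B" "\<forall>a. \<bar>y$a\<bar> \<le> B" "\<forall>a. \<bar>c$a\<bar> \<le> B"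
  shows "(norm (y - c))\<^sup>2 - (norm (x - c))\<^sup>2 \<le> 4 * B * (\<Sum>a\<in>UNIV. \<bar>y$a - x$a\<bar>)"
proof -
  have "(norm (y - c))\<^sup>2 - (norm (x - c))\<^sup>2 = (\<Sum>a\<in>UNIV. (y$a - x$a) * (y$a + x$a - 2 * c$a))"
    unfolding norm_sq_vec sum_subtractf[symmetric]
    by (rule sum.cong) (auto simp: power2_eq_square algebra_simps)
  also have "\<dots> \<le> (\<Sum>a\<in>UNIV. \<bar>y$a - x$a\<bar> * (4 * B))"
  proof (rule sum_mono)
    fix a
    have "\<bar>y$a + x$a - 2 * c$a\<bar> \<le> 4 * B" using assms[rule_format, of a] by linarith
    then have "\<bar>(y$a - x$a) * (y$a + x$a - 2 * c$a)\<bar> \<le> \<bar>y$a - x$a\<bar> * (4 * B)"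
      unfolding abs_mult by (intro mult_left_mono) auto
    then show "(y$a - x$a) * (y$a + x$a - 2 * c$a) \<le> \<bar>y$a - x$a\<bar> * (4 * B)" by linarith
  qed
  also have "\<dots> = 4 * B * (\<Sum>a\<in>UNIV. \<bar>y$a - x$a\<bar>)"
    by (simp add: sum_distrib_left mult.commute)
  finally show ?thesis .
qed

lemma fdiff:
  fixes x y :: "real ^ 'p"
  assumes "finite C" "C \<noteq> {}" "\<forall>c\<in>C. \<forall>a. \<bar>c$a\<bar> \<le> B"
    "\<forall>a. \<bar>x$a\<bar> \<le> B" "\<forall>a. \<bar>y$a\<bar> \<le> B"
  shows "\<bar>f_cb C y - f_cb C x\<bar> \<le> 4 * B * (\<Sum>a\<in>UNIV. \<bar>y$a - x$a\<bar>)"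
proof -
  have px: "proj_cb C x \<in> C" and py: "proj_cb C y \<in> C" using proj_props(1)[OF assms(1,2)] by auto
  have 1: "f_cb C y \<le> (norm (y - proj_cb C x))\<^sup>2" using proj_props(2)[OF assms(1,2) px] .
  have 2: "f_cb C x \<le> (norm (x - proj_cb C y))\<^sup>2" using proj_props(2)[OF assms(1,2) py] .
  have 3: "(norm (y - proj_cb C x))\<^sup>2 - f_cb C x \<le> 4 * B * (\<Sum>a\<in>UNIV. \<bar>y$a - x$a\<bar>)"
    unfolding f_cb_def using sqdiff[OF assms(4,5)] assms(3) px by blast
  have 4: "(norm (x - proj_cb C y))\<^sup>2 - f_cb C y \<le> 4 * B * (\<Sum>a\<in>UNIV. \<bar>x$a - y$a\<bar>)"
    unfolding f_cb_def using sqdiff[OF assms(5,4)] assms(3) py by blast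
  have e: "(\<Sum>a\<in>UNIV. \<bar>x$a - y$a\<bar>) = (\<Sum>a\<in>UNIV. \<bar>y$a - x$a\<bar>)" by (simp add: abs_minus_commute)
  show ?thesis unfolding abs_le_iff using 1 2 3 4[unfolded e] by linarith
qed

theorem lemmaA5:
  fixes B :: real
  shows "\<exists>K::real. \<forall>(M::'a measure) (mu :: 'a \<Rightarrow> real ^ 'p) (muh :: 'a \<Rightarrow> real ^ 'p) (k::nat).
     prob_space M \<longrightarrow>
     mu \<in> borel_measurable M \<longrightarrow> muh \<in> borel_measurable M \<longrightarrow>
     (\<forall>\<omega>\<in>space M. \<forall>a. \<bar>mu \<omega> $ a\<bar> \<le> B) \<longrightarrow>
     (AE \<omega> in M. \<forall>a. \<bar>muh \<omega> $ a\<bar> \<le> B) \<longrightarrow>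
     k \<ge> 1 \<longrightarrow>
     (\<forall>C\<in>codebooks M mu k.
        \<bar>\<integral>\<omega>. (f_cb C (muh \<omega>) - f_cb C (mu \<omega>)) \<partial>M\<bar>
          \<le> K * (MAX a\<in>UNIV. \<integral>\<omega>. \<bar>muh \<omega> $ a - mu \<omega> $ a\<bar> \<partial>M))"
proof (intro exI[of _ "4 * B * real CARD('p)"] allI impI ballI)
  fix M :: "'a measure" and mu muh :: "'a \<Rightarrow> real ^ 'p" and k :: nat and C
  assume P: "prob_space M" and mm: "mu \<in> borel_measurable M" and mh: "muh \<in> borel_measurable M"
    and bmu: "\<forall>\<omega>\<in>space M. \<forall>a. \<bar>mu \<omega> $ a\<bar> \<le> B"
    and bmh: "AE \<omega> in M. \<forall>a. \<bar>muh \<omega> $ a\<bar> \<le> B"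
    and k: "k \<ge> 1" and C: "C \<in> codebooks M mu k"
  interpret prob_space M by (rule P)
  have fin: "finite C" and ne: "C \<noteq> {}" and sub: "C \<subseteq> mu ` space M"
    using C k unfolding codebooks_def by auto
  have bC: "\<forall>c\<in>C. \<forall>a. \<bar>c$a\<bar> \<le> B" using sub bmu by blast
  obtain w where "w \<in> space M" using not_empty by blast
  then have B0: "B \<ge> 0" using bmu by force
  define h where "h a \<omega> = \<bar>muh \<omega> $ a - mu \<omega> $ a\<bar>" for a \<omega>
  have hint: "integrable M (h a)" for a
  proof (rule integrable_const_bound[where B="2*B"])
    show "AE x in M. norm (h a x) \<le> 2 * B"
      using bmh AE_space proof eventually_elim
      case (elim x)
      have "\<bar>mu x $ a\<bar> \<le> B" using bmu elim(2) by blast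
      then show ?case
        using elim(1)[rule_format, of a] unfolding h_def by auto
    qed
    have c: "continuous_on UNIV (\<lambda>v::real^'p. v $ a)"
      by (intro continuous_on_component continuous_on_id)
    have "(\<lambda>x. muh x $ a) \<in> borel_measurable M" "(\<lambda>x. mu x $ a) \<in> borel_measurable M"
      using borel_measurable_continuous_on[OF c mh] borel_measurable_continuous_on[OF c mm] by auto
    then show "h a \<in> borel_measurable M" unfolding h_def by measurable
  qed
  define H where "H \<omega> = 4 * B * (\<Sum>a\<in>UNIV. h a \<omega>)" for \<omega>
  have Hint: "integrable M H" unfolding H_def using hint by auto
  have "\<bar>\<integral>\<omega>. (f_cb C (muh \<omega>) - f_cb C (mu \<omega>)) \<partial>M\<bar>
      \<le> (\<integral>\<omega>. \<bar>f_cb C (muh \<omega>) - f_cb C (mu \<omega>)\<bar> \<partial>M)" by (rule integral_abs_bound)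
  also have "\<dots> \<le> (\<integral>\<omega>. H \<omega> \<partial>M)"
  proof (rule integral_mono_AE'[OF Hint])
    show "AE x in M. \<bar>f_cb C (muh x) - f_cb C (mu x)\<bar> \<le> H x"
      using bmh AE_space proof eventually_elim
      case (elim x)
      then show ?case
        using fdiff[OF fin ne bC, of "mu x" "muh x"] bmu unfolding H_def h_def by auto
    qed
    show "AE x in M. 0 \<le> H x" unfolding H_def h_def using B0 by (auto intro!: sum_nonneg)
  qed
  also have "\<dots> = 4 * B * (\<Sum>a\<in>UNIV. \<integral>\<omega>. h a \<omega> \<partial>M)"
    unfolding H_def using hint by (simp add: integral_sum)
  also have "\<dots> \<le> 4 * B * (\<Sum>a\<in>(UNIV::'p set). (MAX a\<in>UNIV. \<integral>\<omega>. h a \<omega> \<partial>M))"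
    using B0 by (intro mult_left_mono sum_mono) auto
  also have "\<dots> = 4 * B * real CARD('p) * (MAX a\<in>UNIV. \<integral>\<omega>. \<bar>muh \<omega> $ a - mu \<omega> $ a\<bar> \<partial>M)"
    unfolding h_def by simp
  finally show "\<bar>\<integral>\<omega>. (f_cb C (muh \<omega>) - f_cb C (mu \<omega>)) \<partial>M\<bar>
          \<le> 4 * B * real CARD('p) * (MAX a\<in>UNIV. \<integral>\<omega>. \<bar>muh \<omega> $ a - mu \<omega> $ a\<bar> \<partial>M)" .
qed

end
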